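(* Let $\tilde S\subseteq\mathfrak P$ and let $\tilde O\subseteq\mathcal C_{\mathfrak P}(\tilde S)$ be a finite set. Then $\omega_{\tilde S}(\Pi(\tilde O))\ge\min_{o\in\tilde O}\omega_{\tilde S}(o)$.
   Context: $\mathfrak P$ is the group of $N$-qubit Pauli operators modulo phases; $\mathcal C_{\mathfrak P}(\tilde S)$ is the centralizer of $\tilde S$ in $\mathfrak P$; $\Pi(\tilde O)$ is the product of the elements of $\tilde O$. The weight of a Pauli operator is its number of non-identity tensor factors. For $l\in\mathcal C_{\mathfrak P}(\tilde S)$, $\omega_{\tilde S}(l)$ is the minimum weight of an operator $e\in\mathcal C_{\mathfrak P}(\tilde S)$ that anticommutes with $l$ (an undetectable error acting on $l$), with value $+\infty$ if no such $e$ exists. *)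

theory Defs
  imports Main "HOL-Library.Extended_Nat" "HOL-Library.Function_Algebras"
begin

text \<open>Single-qubit Pauli operators modulo phases.\<close>

datatype pauli = PI | PX | PY | PZ

instantiation pauli :: comm_monoid_mult
begin

fun times_pauli :: "pauli \<Rightarrow> pauli \<Rightarrow> pauli" where
  "times_pauli PI q = q"
| "times_pauli p PI = p"
| "times_pauli PX PX = PI" | "times_pauli PX PY = PZ" | "times_pauli PX PZ = PY"
| "times_pauli PY PX = PZ" | "times_pauli PY PY = PI" | "times_pauli PY PZ = PX"
| "times_pauli PZ PX = PY" | "times_pauli PZ PY = PX" | "times_pauli PZ PZ = PI"

definition one_pauli :: pauli where "one_pauli = PI"

instance
proof
  fix a b c :: pauli
  show "a * b * c = a * (b * c)" by (cases a; cases b; cases c) auto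
  show "a * b = b * a" by (cases a; cases b) auto
  show "1 * a = a" by (simp add: one_pauli_def)
qed
end

text \<open>N-qubit Pauli operators modulo phases: functions from qubit indices to
single-qubit Paulis that are the identity outside qubits 0..N-1. Multiplication
(modulo phases) is pointwise (Function_Algebras instance on functions).\<close>

definition pauli_group :: "nat \<Rightarrow> (nat \<Rightarrow> pauli) set" where
  "pauli_group N = {p. \<forall>i\<ge>N. p i = PI}"

definition anticommutes :: "(nat \<Rightarrow> pauli) \<Rightarrow> (nat \<Rightarrow> pauli) \<Rightarrow> bool" where
  "anticommutes p q \<longleftrightarrow> odd (card {i. p i \<noteq> PI \<and> q i \<noteq> PI \<and> p i \<noteq> q i})"

definition commutes :: "(nat \<Rightarrow> pauli) \<Rightarrow> (nat \<Rightarrow> pauli) \<Rightarrow> bool" where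
  "commutes p q \<longleftrightarrow> \<not> anticommutes p q"

definition centralizer :: "nat \<Rightarrow> (nat \<Rightarrow> pauli) set \<Rightarrow> (nat \<Rightarrow> pauli) set" where
  "centralizer N S = {p \<in> pauli_group N. \<forall>s\<in>S. commutes p s}"

definition weight :: "(nat \<Rightarrow> pauli) \<Rightarrow> nat" where
  "weight p = card {i. p i \<noteq> PI}"

text \<open>omega: minimum weight of an element of the centralizer anticommuting with l;
infinity if none exists (Inf of the empty set in enat).\<close>
definition omega :: "nat \<Rightarrow> (nat \<Rightarrow> pauli) set \<Rightarrow> (nat \<Rightarrow> pauli) \<Rightarrow> enat" where
  "omega N S l = (INF e \<in> {e \<in> centralizer N S. anticommutes e l}. enat (weight e))"

end

theory Submission
  imports Defs
begin

definition sy :: "pauli \<Rightarrow> pauli \<Rightarrow> bool" where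
  "sy a b \<longleftrightarrow> a \<noteq> PI \<and> b \<noteq> PI \<and> a \<noteq> b"

lemma sy_mult: "sy a (b * c) \<longleftrightarrow> (sy a b \<noteq> sy a c)"
  unfolding sy_def by (cases a; cases b; cases c; simp only: times_pauli.simps pauli.distinct simp_thms)

lemma card_xor:
  assumes "finite D"
  shows "even (card {i\<in>D. P i \<noteq> Q i} + card {i\<in>D. P i} + card {i\<in>D. Q i})"
proof -
  let ?A = "{i\<in>D. P i}" and ?B = "{i\<in>D. Q i}"
  have fA: "finite ?A" "finite ?B" using assms by auto
  have e: "{i\<in>D. P i \<noteq> Q i} = (?A \<union> ?B) - (?A \<inter> ?B)" by auto
  have c1: "card ((?A \<union> ?B) - (?A \<inter> ?B)) = card (?A \<union> ?B) - card (?A \<inter> ?B)"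
    using fA by (intro card_Diff_subset) auto
  have c2: "card (?A \<union> ?B) + card (?A \<inter> ?B) = card ?A + card ?B"
    using card_Un_Int[OF fA] by linarith
  have c3: "card (?A \<inter> ?B) \<le> card (?A \<union> ?B)"
    using fA by (intro card_mono) auto
  define u where "u = card (?A \<union> ?B)"
  define v where "v = card (?A \<inter> ?B)"
  define a where "a = card ?A"
  define b where "b = card ?B"
  have "card {i\<in>D. P i \<noteq> Q i} = u - v" unfolding e c1 u_def v_def ..
  moreover have "u + v = a + b" "v \<le> u" using c2 c3 unfolding u_def v_def a_def b_def by auto
  ultimately have "card {i\<in>D. P i \<noteq> Q i} + a + b = 2 * u" by linarith
  then show ?thesis unfolding a_def b_def by (metis even_mult_iff even_numeral)
qed

lemma anti_mult:
  assumes "finite {i. e i \<noteq> PI}"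
  shows "anticommutes e (p * q) \<longleftrightarrow> (anticommutes e p \<noteq> anticommutes e q)"
proof -
  let ?D = "{i. e i \<noteq> PI}"
  have k: "\<And>r. {i. e i \<noteq> PI \<and> r i \<noteq> PI \<and> e i \<noteq> r i} = {i\<in>?D. sy (e i) (r i)}"
    by (auto simp: sy_def)
  have "even (card {i\<in>?D. sy (e i) (p i) \<noteq> sy (e i) (q i)} + card {i\<in>?D. sy (e i) (p i)}
        + card {i\<in>?D. sy (e i) (q i)})"
    by (rule card_xor[OF assms])
  moreover have "{i\<in>?D. sy (e i) ((p*q) i)} = {i\<in>?D. sy (e i) (p i) \<noteq> sy (e i) (q i)}"
    by (auto simp: times_fun_def sy_mult)
  ultimately show ?thesis unfolding anticommutes_def k by auto
qed

lemma anti_prod: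
  assumes "finite {i. e i \<noteq> PI}" "finite F" "anticommutes e (\<Prod>F)"
  shows "\<exists>o'\<in>F. anticommutes e o'"
  using assms(2,3)
proof (induction F rule: finite_induct)
  case empty
  have "{i. e i \<noteq> PI \<and> (\<Prod>{}::nat\<Rightarrow>pauli) i \<noteq> PI \<and> e i \<noteq> (\<Prod>{}::nat\<Rightarrow>pauli) i} = {}"
    by (auto simp: one_fun_def one_pauli_def)
  then show ?case using empty by (simp add: anticommutes_def one_fun_def one_pauli_def)
next
  case (insert x F)
  from insert.prems have "anticommutes e (x * \<Prod>F)" unfolding prod.insert[OF insert.hyps(1,2)] .
  then show ?case using insert anti_mult[OF assms(1)] by auto
qed

theorem lemma2:
  fixes N :: nat and S Obs :: "(nat \<Rightarrow> pauli) set"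
  assumes "S \<subseteq> pauli_group N"
    and "finite Obs"
    and "Obs \<subseteq> centralizer N S"
  shows "omega N S (\<Prod>Obs) \<ge> (INF o' \<in> Obs. omega N S o')"
  unfolding omega_def[of N S "\<Prod>Obs"]
proof (rule INF_greatest)
  fix e assume e: "e \<in> {e \<in> centralizer N S. anticommutes e (\<Prod>Obs)}"
  then have "e \<in> pauli_group N" by (auto simp: centralizer_def)
  then have "{i. e i \<noteq> PI} \<subseteq> {..<N}" by (auto simp: pauli_group_def) (meson not_le)
  then have fin: "finite {i. e i \<noteq> PI}" using finite_subset by blast
  obtain o' where o: "o' \<in> Obs" "anticommutes e o'" using anti_prod[OF fin assms(2)] e by auto
  have "omega N S o' \<le> enat (weight e)"
    unfolding omega_def using e o by (intro INF_lower) auto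
  moreover have "(INF o' \<in> Obs. omega N S o') \<le> omega N S o'" using o by (intro INF_lower)
  ultimately show "(INF o' \<in> Obs. omega N S o') \<le> enat (weight e)" by simp
qed

end
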